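(* Let $X$ be a real-valued random variable, let $Z\sim\mathcal{N}(0,1)$ be independent of $X$, set $Y=X+Z$, and let $a\in\mathbb{R}$. Then $\mathsf{m}(X\mid Y=y)=ay$ for all $y\in\mathbb{R}$ if and only if, for almost every $y\in\mathbb{R}$, $$\mathbb{E}\big[\mathsf{sign}(X-ay)\,\phi(y-X)\big]=0,$$ where $\phi$ is the standard Gaussian density.
   Context: The conditional median is $\mathsf{m}(X\mid Y=y)=F^{-1}_{X\mid Y=y}(1/2)$, where $F_{X\mid Y=y}$ is the conditional cdf of $X$ given $Y=y$ and $F^{-1}(p)=\inf\{x\in\mathbb{R}: p\le F(x)\}$. *)

theory Defs
  imports "HOL-Probability.Probability"
begin

text \<open>Conditional cdf of X given Y = y, where Y = X + Z with Z ~ N(0,1) independent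
  of X.  This is the canonical (Bayes-formula) version, defined for every y:
  F(x | y) = E[1{X <= x} phi(y - X)] / E[phi(y - X)].\<close>
definition gauss_cond_cdf :: "'a measure \<Rightarrow> ('a \<Rightarrow> real) \<Rightarrow> real \<Rightarrow> real \<Rightarrow> real" where
  "gauss_cond_cdf M X y x =
     (\<integral>\<omega>. indicator {..x} (X \<omega>) * std_normal_density (y - X \<omega>) \<partial>M) /
     (\<integral>\<omega>. std_normal_density (y - X \<omega>) \<partial>M)"

definition gen_inverse :: "(real \<Rightarrow> real) \<Rightarrow> real \<Rightarrow> real" where
  "gen_inverse F p = Inf {x. p \<le> F x}"

definition gauss_cond_median :: "'a measure \<Rightarrow> ('a \<Rightarrow> real) \<Rightarrow> real \<Rightarrow> real" where
  "gauss_cond_median M X y = gen_inverse (gauss_cond_cdf M X y) (1/2)"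

end

theory Submission
  imports Defs
begin


definition JJ :: "'a measure \<Rightarrow> ('a \<Rightarrow> real) \<Rightarrow> real set \<Rightarrow> real \<Rightarrow> real" where
  "JJ M X S y = (\<integral>\<omega>. indicator S (X \<omega>) * std_normal_density (y - X \<omega>) \<partial>M)"

lemma phi_pos: "std_normal_density x > 0"
  by (simp add: std_normal_density_def)

lemma phi_le1: "std_normal_density x \<le> 1"
proof -
  have "exp (- x\<^sup>2 / 2) \<le> 1" by simp
  moreover have "1 / sqrt (2 * pi) \<le> 1" using pi_ge_two by (simp add: divide_le_eq real_le_rsqrt)
  ultimately show ?thesis unfolding std_normal_density_def
    by (metis exp_gt_zero less_eq_real_def mult_le_one zero_le_divide_1_iff real_sqrt_ge_zero)
qed

lemma phi_cont: "isCont std_normal_density x"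
  unfolding std_normal_density_def[abs_def] by (intro continuous_intros) auto

lemma phi_even: "std_normal_density (- x) = std_normal_density x"
  by (simp add: std_normal_density_def)

lemma phi_shift: "std_normal_density (y + t - x) = exp (- (t*y) - t\<^sup>2/2) * std_normal_density (y - x) * exp (t * x)"
proof -
  have "- (y + t - x)\<^sup>2 / 2 = (- (t*y) - t\<^sup>2/2) + (- (y - x)\<^sup>2 / 2) + t * x"
    by (simp add: power2_eq_square field_simps)
  then have "exp (- (y + t - x)\<^sup>2 / 2) = exp (- (t*y) - t\<^sup>2/2) * exp (- (y - x)\<^sup>2 / 2) * exp (t * x)"
    by (simp add: exp_add[symmetric])
  then show ?thesis unfolding std_normal_density_def by simp
qed

lemma J_int:
  assumes "prob_space M" "X \<in> borel_measurable M" "S \<in> sets borel"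
  shows "integrable M (\<lambda>\<omega>. indicator S (X \<omega>) * std_normal_density (y - X \<omega>))"
proof -
  interpret prob_space M by fact
  show ?thesis
    apply (rule integrable_const_bound[where B=1])
    using phi_le1 phi_pos apply (auto simp: indicator_def abs_of_pos less_imp_le)[1]
    using assms by measurable
qed

lemma J_add:
  assumes "prob_space M" "X \<in> borel_measurable M" "A \<in> sets borel" "B \<in> sets borel" "A \<inter> B = {}"
  shows "JJ M X (A \<union> B) y = JJ M X A y + JJ M X B y"
proof -
  have "JJ M X (A \<union> B) y = (\<integral>\<omega>. indicator A (X \<omega>) * std_normal_density (y - X \<omega>) + indicator B (X \<omega>) * std_normal_density (y - X \<omega>) \<partial>M)"
    unfolding JJ_def by (intro Bochner_Integration.integral_cong) (auto simp: indicator_disj_union[OF assms(5)] algebra_simps)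
  also have "\<dots> = JJ M X A y + JJ M X B y"
    unfolding JJ_def by (rule Bochner_Integration.integral_add; intro J_int assms)
  finally show ?thesis .
qed

lemma J_mono:
  assumes "prob_space M" "X \<in> borel_measurable M" "A \<in> sets borel" "B \<in> sets borel" "A \<subseteq> B"
  shows "JJ M X A y \<le> JJ M X B y"
  unfolding JJ_def
  apply (rule integral_mono)
  using assms apply (auto intro!: J_int)[2]
  using assms(5) phi_pos by (auto simp: indicator_def less_imp_le)

lemma J_nonneg: "JJ M X A y \<ge> 0"
  unfolding JJ_def using phi_pos by (auto intro!: integral_nonneg simp: less_imp_le)

lemma J_zero_iff:
  assumes "prob_space M" "X \<in> borel_measurable M" "A \<in> sets borel"
  shows "JJ M X A y = 0 \<longleftrightarrow> (AE \<omega> in M. X \<omega> \<notin> A)"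
proof -
  have "JJ M X A y = 0 \<longleftrightarrow> (AE \<omega> in M. indicator A (X \<omega>) * std_normal_density (y - X \<omega>) = 0)"
    unfolding JJ_def using phi_pos
    by (intro integral_nonneg_eq_0_iff_AE J_int assms) (auto simp: less_imp_le)
  also have "\<dots> \<longleftrightarrow> (AE \<omega> in M. X \<omega> \<notin> A)"
    using phi_pos by (intro AE_cong) (auto simp: indicator_def less_imp_neq[symmetric])
  finally show ?thesis .
qed

lemma J_UNIV_pos:
  assumes "prob_space M" "X \<in> borel_measurable M"
  shows "JJ M X UNIV y > 0"
proof -
  interpret prob_space M by fact
  have "JJ M X UNIV y \<noteq> 0" using J_zero_iff[OF assms, of UNIV y] AE_False by simp
  then show ?thesis using J_nonneg[of M X UNIV y] by linarith
qed

lemma J_lim: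
  assumes "prob_space M" "X \<in> borel_measurable M" "\<And>n. S n \<in> sets borel" "S' \<in> sets borel"
    and "\<And>x. eventually (\<lambda>n. (x \<in> S n) = (x \<in> S')) sequentially"
    and "yn \<longlonglongrightarrow> y"
  shows "(\<lambda>n. JJ M X (S n) (yn n)) \<longlonglongrightarrow> JJ M X S' y"
proof -
  interpret prob_space M by fact
  show ?thesis
    unfolding JJ_def
  proof (rule integral_dominated_convergence[where w="\<lambda>_. 1"])
    show "(\<lambda>\<omega>. indicator S' (X \<omega>) * std_normal_density (y - X \<omega>)) \<in> borel_measurable M"
      using assms by measurable
    show "\<And>i. (\<lambda>\<omega>. indicator (S i) (X \<omega>) * std_normal_density (yn i - X \<omega>)) \<in> borel_measurable M"
      using assms by measurable
    show "integrable M (\<lambda>_. 1::real)" by simp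
    show "AE \<omega> in M. (\<lambda>i. indicator (S i) (X \<omega>) * std_normal_density (yn i - X \<omega>))
       \<longlonglongrightarrow> indicator S' (X \<omega>) * std_normal_density (y - X \<omega>)"
    proof (intro AE_I2 tendsto_mult)
      fix \<omega>
      show "(\<lambda>i. indicator (S i) (X \<omega>) :: real) \<longlonglongrightarrow> indicator S' (X \<omega>)"
        by (rule tendsto_eventually) (use assms(5)[of "X \<omega>"] in \<open>auto elim!: eventually_mono simp: indicator_def\<close>)
      show "(\<lambda>i. std_normal_density (yn i - X \<omega>)) \<longlonglongrightarrow> std_normal_density (y - X \<omega>)"
        by (rule isCont_tendsto_compose[OF phi_cont]) (intro tendsto_intros assms(6))
    qed
    show "\<And>i. AE \<omega> in M. norm (indicator (S i) (X \<omega>) * std_normal_density (yn i - X \<omega>)) \<le> 1"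
      using phi_le1 phi_pos by (auto simp: indicator_def abs_of_pos)
  qed
qed

lemma W_eq:
  assumes "prob_space M" "X \<in> borel_measurable M" "S \<in> sets borel"
  shows "integrable M (\<lambda>\<omega>. indicator S (X \<omega>) * std_normal_density (y - X \<omega>) * exp (t * X \<omega>))"
    and "(\<integral>\<omega>. indicator S (X \<omega>) * std_normal_density (y - X \<omega>) * exp (t * X \<omega>) \<partial>M) = exp (t*y + t\<^sup>2/2) * JJ M X S (y + t)"
proof -
  have eq: "(\<lambda>\<omega>. indicator S (X \<omega>) * std_normal_density (y - X \<omega>) * exp (t * X \<omega>)) =
     (\<lambda>\<omega>. exp (t*y + t\<^sup>2/2) * (indicator S (X \<omega>) * std_normal_density (y + t - X \<omega>)))"
  proof
    fix \<omega>
    have "exp (t*y + t\<^sup>2/2) * exp (- (t*y) - t\<^sup>2/2) = 1" by (simp add: exp_add[symmetric])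
    then show "indicator S (X \<omega>) * std_normal_density (y - X \<omega>) * exp (t * X \<omega>) =
       exp (t*y + t\<^sup>2/2) * (indicator S (X \<omega>) * std_normal_density (y + t - X \<omega>))"
      unfolding phi_shift by (simp add: algebra_simps)
  qed
  show "integrable M (\<lambda>\<omega>. indicator S (X \<omega>) * std_normal_density (y - X \<omega>) * exp (t * X \<omega>))"
    unfolding eq by (intro integrable_mult_right J_int assms)
  show "(\<integral>\<omega>. indicator S (X \<omega>) * std_normal_density (y - X \<omega>) * exp (t * X \<omega>) \<partial>M) = exp (t*y + t\<^sup>2/2) * JJ M X S (y + t)"
    unfolding eq JJ_def by simp
qed

lemma J_pair:
  assumes P: "prob_space M" "X \<in> borel_measurable M" and AB: "A \<in> sets borel" "B \<in> sets borel"
    and "y < y'" "A \<subseteq> {..x}" "B \<subseteq> {x<..}"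
    and e1: "JJ M X A y = JJ M X B y" and e2: "JJ M X A y' = JJ M X B y'" and pos: "JJ M X B y > 0"
  shows False
proof -
  define t where "t = y' - y"
  have t: "t > 0" "y' = y + t" using assms(5) by (auto simp: t_def)
  let ?WA = "\<integral>\<omega>. indicator A (X \<omega>) * std_normal_density (y - X \<omega>) * exp (t * X \<omega>) \<partial>M"
  let ?WB = "\<integral>\<omega>. indicator B (X \<omega>) * std_normal_density (y - X \<omega>) * exp (t * X \<omega>) \<partial>M"
  have WAB: "?WA = ?WB" unfolding W_eq(2)[OF P AB(1)] W_eq(2)[OF P AB(2)] using e2 t by simp
  have "?WA \<le> (\<integral>\<omega>. exp (t * x) * (indicator A (X \<omega>) * std_normal_density (y - X \<omega>)) \<partial>M)"
  proof (rule integral_mono)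
    show "integrable M (\<lambda>\<omega>. indicator A (X \<omega>) * std_normal_density (y - X \<omega>) * exp (t * X \<omega>))"
      by (rule W_eq(1)[OF P AB(1)])
    show "integrable M (\<lambda>\<omega>. exp (t * x) * (indicator A (X \<omega>) * std_normal_density (y - X \<omega>)))"
      by (intro integrable_mult_right J_int P AB)
    fix \<omega>
    show "indicator A (X \<omega>) * std_normal_density (y - X \<omega>) * exp (t * X \<omega>) \<le> exp (t * x) * (indicator A (X \<omega>) * std_normal_density (y - X \<omega>))"
    proof (cases "X \<omega> \<in> A")
      case True
      then have "X \<omega> \<le> x" using assms(6) by auto
      then have "exp (t * X \<omega>) \<le> exp (t * x)" using t by (simp add: mult_left_mono)
      then show ?thesis using True phi_pos[of "y - X \<omega>"] by (simp add: mult.commute)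
    qed simp
  qed
  also have "\<dots> = exp (t * x) * JJ M X A y" unfolding JJ_def by simp
  finally have WA: "?WA \<le> exp (t * x) * JJ M X A y" .
  let ?D = "\<lambda>\<omega>. indicator B (X \<omega>) * std_normal_density (y - X \<omega>) * (exp (t * X \<omega>) - exp (t * x))"
  have Deq0: "?D = (\<lambda>\<omega>. indicator B (X \<omega>) * std_normal_density (y - X \<omega>) * exp (t * X \<omega>) - exp (t * x) * (indicator B (X \<omega>) * std_normal_density (y - X \<omega>)))"
    by (auto simp: algebra_simps)
  have i1: "integrable M (\<lambda>\<omega>. indicator B (X \<omega>) * std_normal_density (y - X \<omega>) * exp (t * X \<omega>))"
    by (rule W_eq(1)[OF P AB(2)])
  have i2: "integrable M (\<lambda>\<omega>. exp (t * x) * (indicator B (X \<omega>) * std_normal_density (y - X \<omega>)))"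
    by (intro integrable_mult_right J_int P AB)
  have Dint: "integrable M ?D"
    unfolding Deq0 by (rule Bochner_Integration.integrable_diff[OF i1 i2])
  have Deq: "integral\<^sup>L M ?D = ?WB - exp (t * x) * JJ M X B y"
    unfolding Deq0 Bochner_Integration.integral_diff[OF i1 i2] JJ_def by simp
  have Dnn: "AE \<omega> in M. 0 \<le> ?D \<omega>"
  proof (intro AE_I2)
    fix \<omega>
    show "0 \<le> ?D \<omega>"
    proof (cases "X \<omega> \<in> B")
      case True
      then have "X \<omega> > x" using assms(7) by auto
      then have "exp (t * X \<omega>) \<ge> exp (t * x)" using t by (simp add: mult_left_mono)
      then show ?thesis using True phi_pos[of "y - X \<omega>"] by simp
    qed simp
  qed
  have "integral\<^sup>L M ?D \<noteq> 0"
  proof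
    assume "integral\<^sup>L M ?D = 0"
    then have "AE \<omega> in M. ?D \<omega> = 0" using integral_nonneg_eq_0_iff_AE[OF Dint Dnn] by simp
    then have "AE \<omega> in M. X \<omega> \<notin> B"
    proof (rule eventually_mono)
      fix \<omega> assume h: "?D \<omega> = 0"
      show "X \<omega> \<notin> B"
      proof
        assume "X \<omega> \<in> B"
        then have "X \<omega> > x" using assms(7) by auto
        then have "exp (t * X \<omega>) > exp (t * x)" using t by simp
        then show False using h \<open>X \<omega> \<in> B\<close> phi_pos[of "y - X \<omega>"] using t by auto
      qed
    qed
    then have "JJ M X B y = 0" using J_zero_iff[OF P AB(2)] by simp
    then show False using pos by simp
  qed
  moreover have "integral\<^sup>L M ?D \<ge> 0" using Dnn by (intro integral_nonneg_AE)
  ultimately have "?WB > exp (t * x) * JJ M X B y" using Deq by simp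
  with WA WAB e1 show False by simp
qed

lemma ev_below:
  fixes cn :: "nat \<Rightarrow> real"
  assumes "cn \<longlonglongrightarrow> c" "\<And>n. cn n < c"
  shows "eventually (\<lambda>n. (x \<in> {..cn n}) = (x \<in> {..<c})) sequentially"
    and "eventually (\<lambda>n. (x \<in> {cn n<..}) = (x \<in> {c..})) sequentially"
proof -
  have "eventually (\<lambda>n. (x \<in> {..cn n}) = (x \<in> {..<c}) \<and> (x \<in> {cn n<..}) = (x \<in> {c..})) sequentially"
  proof (cases "x < c")
    case True
    show ?thesis using order_tendstoD(1)[OF assms(1) True] True
      by (auto elim!: eventually_mono)
  next
    case False
    show ?thesis
    proof (intro always_eventually allI)
      fix n show "(x \<in> {..cn n}) = (x \<in> {..<c}) \<and> (x \<in> {cn n<..}) = (x \<in> {c..})"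
        using assms(2)[of n] False by auto
    qed
  qed
  then show "eventually (\<lambda>n. (x \<in> {..cn n}) = (x \<in> {..<c})) sequentially"
    and "eventually (\<lambda>n. (x \<in> {cn n<..}) = (x \<in> {c..})) sequentially"
    by (auto elim: eventually_mono)
qed

lemma ev_above:
  fixes cn :: "nat \<Rightarrow> real"
  assumes "cn \<longlonglongrightarrow> c" "\<And>n. cn n > c"
  shows "eventually (\<lambda>n. (x \<in> {..cn n}) = (x \<in> {..c})) sequentially"
    and "eventually (\<lambda>n. (x \<in> {cn n<..}) = (x \<in> {c<..})) sequentially"
proof -
  have "eventually (\<lambda>n. (x \<in> {..cn n}) = (x \<in> {..c}) \<and> (x \<in> {cn n<..}) = (x \<in> {c<..})) sequentially"
  proof (cases "c < x")
    case True
    show ?thesis using order_tendstoD(2)[OF assms(1) True] True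
      by (auto elim!: eventually_mono)
  next
    case False
    show ?thesis
    proof (intro always_eventually allI)
      fix n show "(x \<in> {..cn n}) = (x \<in> {..c}) \<and> (x \<in> {cn n<..}) = (x \<in> {c<..})"
        using assms(2)[of n] False by auto
    qed
  qed
  then show "eventually (\<lambda>n. (x \<in> {..cn n}) = (x \<in> {..c})) sequentially"
    and "eventually (\<lambda>n. (x \<in> {cn n<..}) = (x \<in> {c<..})) sequentially"
    by (auto elim: eventually_mono)
qed

lemma ev_top: "eventually (\<lambda>n. (x \<in> {..real n}) = (x \<in> UNIV) \<and> (x \<in> {real n<..}) = (x \<in> {})) sequentially"
proof -
  obtain N where "x \<le> real N" by (meson real_arch_simple)
  then show ?thesis by (intro eventually_sequentiallyI[of N]) auto
qed

lemma ev_bot: "eventually (\<lambda>n. (x \<in> {..- real n}) = (x \<in> {}) \<and> (x \<in> {- real n<..}) = (x \<in> UNIV)) sequentially"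
proof -
  obtain N where "- x < real N" by (meson reals_Archimedean2)
  then show ?thesis by (intro eventually_sequentiallyI[of N]) auto
qed

lemma cdf_eq:
  shows "gauss_cond_cdf M X y x = JJ M X {..x} y / JJ M X UNIV y"
  unfolding gauss_cond_cdf_def JJ_def by simp

lemma J_split:
  assumes "prob_space M" "X \<in> borel_measurable M"
  shows "JJ M X UNIV y = JJ M X {..x} y + JJ M X {x<..} y"
    and "JJ M X {..x} y = JJ M X {..<x} y + JJ M X {x} y"
    and "JJ M X {x..} y = JJ M X {x} y + JJ M X {x<..} y"
proof -
  have "UNIV = {..x} \<union> {x<..}" by auto
  then show "JJ M X UNIV y = JJ M X {..x} y + JJ M X {x<..} y"
    using J_add[OF assms, of "{..x}" "{x<..}" y] by (auto simp: disjoint_iff)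
  have "{..x} = {..<x} \<union> {x}" by auto
  then show "JJ M X {..x} y = JJ M X {..<x} y + JJ M X {x} y"
    using J_add[OF assms, of "{..<x}" "{x}" y] by (auto simp: disjoint_iff)
  have "{x..} = {x} \<union> {x<..}" by auto
  then show "JJ M X {x..} y = JJ M X {x} y + JJ M X {x<..} y"
    using J_add[OF assms, of "{x}" "{x<..}" y] by (auto simp: disjoint_iff)
qed

lemma half_iff:
  assumes "prob_space M" "X \<in> borel_measurable M"
  shows "1/2 \<le> gauss_cond_cdf M X y x \<longleftrightarrow> JJ M X {x<..} y \<le> JJ M X {..x} y"
  using J_UNIV_pos[OF assms, of y] unfolding cdf_eq J_split(1)[OF assms, of y x]
  by (simp add: field_simps)

lemma median_suff:
  assumes "prob_space M" "X \<in> borel_measurable M"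
    and "JJ M X {c<..} y \<le> JJ M X {..c} y" and "\<And>x. x < c \<Longrightarrow> JJ M X {..x} y < JJ M X {x<..} y"
  shows "gauss_cond_median M X y = c"
  unfolding gauss_cond_median_def gen_inverse_def
proof (rule cInf_eq_minimum)
  show "c \<in> {x. 1 / 2 \<le> gauss_cond_cdf M X y x}" using assms(3) half_iff[OF assms(1,2)] by simp
  fix x assume "x \<in> {x. 1 / 2 \<le> gauss_cond_cdf M X y x}"
  then have "JJ M X {x<..} y \<le> JJ M X {..x} y" using half_iff[OF assms(1,2)] by simp
  then show "c \<le> x" using assms(4)[of x] by force
qed

lemma lim_le:
  fixes f g :: "nat \<Rightarrow> real"
  shows "f \<longlonglongrightarrow> a \<Longrightarrow> g \<longlonglongrightarrow> b \<Longrightarrow> eventually (\<lambda>n. f n \<le> g n) sequentially \<Longrightarrow> a \<le> b"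
  using tendsto_le[OF trivial_limit_sequentially] by blast

lemma seq_below: "(\<lambda>n. c - inverse (real (Suc n))) \<longlonglongrightarrow> (c::real)"
  using tendsto_diff[OF tendsto_const LIMSEQ_inverse_real_of_nat, of c] by simp

lemma seq_above: "(\<lambda>n. c + inverse (real (Suc n))) \<longlonglongrightarrow> (c::real)"
  using tendsto_add[OF tendsto_const LIMSEQ_inverse_real_of_nat, of c] by simp

lemma J_empty: "JJ M X {} y = 0" unfolding JJ_def by simp

lemma median_nec:
  assumes P: "prob_space M" "X \<in> borel_measurable M"
    and med: "gauss_cond_median M X y = c"
  shows "JJ M X {..<c} y \<le> JJ M X {c..} y" and "JJ M X {c<..} y \<le> JJ M X {..c} y"
proof -
  define T where "T = {x. 1/2 \<le> gauss_cond_cdf M X y x}"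
  have T: "x \<in> T \<longleftrightarrow> JJ M X {x<..} y \<le> JJ M X {..x} y" for x
    unfolding T_def using half_iff[OF P] by simp
  have cT: "c = Inf T" using med unfolding gauss_cond_median_def gen_inverse_def T_def by simp
  have mono: "s \<in> T" if "t \<le> s" "t \<in> T" for s t
  proof -
    have "JJ M X {s<..} y \<le> JJ M X {t<..} y" using that by (intro J_mono[OF P]) auto
    also have "\<dots> \<le> JJ M X {..t} y" using that T by simp
    also have "\<dots> \<le> JJ M X {..s} y" using that by (intro J_mono[OF P]) auto
    finally show ?thesis using T by simp
  qed
  have G: "JJ M X UNIV y > 0" by (rule J_UNIV_pos[OF P])
  have l1: "(\<lambda>n. JJ M X {..real n} y - JJ M X {real n<..} y) \<longlonglongrightarrow> JJ M X UNIV y - JJ M X {} y"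
    by (intro tendsto_diff J_lim[OF P]) (auto intro: eventually_mono[OF ev_top])
  then have "eventually (\<lambda>n. JJ M X {..real n} y - JJ M X {real n<..} y > 0) sequentially"
    using G by (intro order_tendstoD(1)) (auto simp: J_empty)
  then obtain n where "JJ M X {..real n} y - JJ M X {real n<..} y > 0" by (meson eventually_sequentially order_refl)
  then have Tne: "T \<noteq> {}" using T[of "real n"] by auto
  have l2: "(\<lambda>n. JJ M X {..- real n} y - JJ M X {- real n<..} y) \<longlonglongrightarrow> JJ M X {} y - JJ M X UNIV y"
    by (intro tendsto_diff J_lim[OF P]) (auto intro: eventually_mono[OF ev_bot])
  then have "eventually (\<lambda>n. JJ M X {..- real n} y - JJ M X {- real n<..} y < 0) sequentially"
    using G by (intro order_tendstoD(2)) (auto simp: J_empty)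
  then obtain N where "JJ M X {..- real N} y - JJ M X {- real N<..} y < 0" by (meson eventually_sequentially order_refl)
  then have NT: "- real N \<notin> T" using T[of "- real N"] by auto
  have bdd: "bdd_below T"
  proof (rule bdd_belowI)
    fix t assume "t \<in> T"
    then show "- real N \<le> t" using mono[of t "- real N"] NT by force
  qed
  let ?cn = "\<lambda>n. c - inverse (real (Suc n))"
  have nT: "?cn n \<notin> T" for n
  proof
    assume "?cn n \<in> T"
    then have "c \<le> ?cn n" unfolding cT by (rule cInf_lower[OF _ bdd])
    then show False by simp
  qed
  have "JJ M X {..?cn n} y \<le> JJ M X {?cn n<..} y" for n using T[of "?cn n"] nT[of n] by linarith
  moreover have "(\<lambda>n. JJ M X {..?cn n} y) \<longlonglongrightarrow> JJ M X {..<c} y"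
    by (rule J_lim[OF P _ _ ev_below(1)[OF seq_below]]) auto
  moreover have "(\<lambda>n. JJ M X {?cn n<..} y) \<longlonglongrightarrow> JJ M X {c..} y"
    by (rule J_lim[OF P _ _ ev_below(2)[OF seq_below]]) auto
  ultimately show "JJ M X {..<c} y \<le> JJ M X {c..} y"
    by (intro lim_le) auto
  let ?dn = "\<lambda>n. c + inverse (real (Suc n))"
  have dT: "?dn n \<in> T" for n
  proof -
    have "Inf T < ?dn n" unfolding cT[symmetric] by simp
    then obtain t where "t \<in> T" "t < ?dn n" using cInf_lessD[OF Tne] by blast
    then show ?thesis using mono[of t "?dn n"] by simp
  qed
  have "JJ M X {?dn n<..} y \<le> JJ M X {..?dn n} y" for n using T[of "?dn n"] dT[of n] by linarith
  moreover have "(\<lambda>n. JJ M X {..?dn n} y) \<longlonglongrightarrow> JJ M X {..c} y"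
    by (rule J_lim[OF P _ _ ev_above(1)[OF seq_above]]) auto
  moreover have "(\<lambda>n. JJ M X {?dn n<..} y) \<longlonglongrightarrow> JJ M X {c<..} y"
    by (rule J_lim[OF P _ _ ev_above(2)[OF seq_above]]) auto
  ultimately show "JJ M X {c<..} y \<le> JJ M X {..c} y"
    by (intro lim_le) auto
qed

lemma sign_eq:
  assumes P: "prob_space M" "X \<in> borel_measurable M"
  shows "(\<integral>\<omega>. sgn (X \<omega> - c) * std_normal_density (y - X \<omega>) \<partial>M) = JJ M X {c<..} y - JJ M X {..<c} y"
proof -
  have "(\<integral>\<omega>. sgn (X \<omega> - c) * std_normal_density (y - X \<omega>) \<partial>M) =
    (\<integral>\<omega>. indicator {c<..} (X \<omega>) * std_normal_density (y - X \<omega>) - indicator {..<c} (X \<omega>) * std_normal_density (y - X \<omega>) \<partial>M)"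
    by (intro Bochner_Integration.integral_cong) (auto simp: indicator_def sgn_if)
  also have "\<dots> = JJ M X {c<..} y - JJ M X {..<c} y"
    unfolding JJ_def by (rule Bochner_Integration.integral_diff; intro J_int P; simp)
  finally show ?thesis .
qed

lemma W_le:
  assumes P: "prob_space M" "X \<in> borel_measurable M" and S: "S \<in> sets borel" "S \<subseteq> {..x}" and t: "t \<ge> 0"
  shows "(\<integral>\<omega>. indicator S (X \<omega>) * std_normal_density (y - X \<omega>) * exp (t * X \<omega>) \<partial>M) \<le> exp (t * x) * JJ M X S y"
proof -
  have "(\<integral>\<omega>. indicator S (X \<omega>) * std_normal_density (y - X \<omega>) * exp (t * X \<omega>) \<partial>M) \<le> (\<integral>\<omega>. exp (t * x) * (indicator S (X \<omega>) * std_normal_density (y - X \<omega>)) \<partial>M)"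
  proof (rule integral_mono)
    show "integrable M (\<lambda>\<omega>. indicator S (X \<omega>) * std_normal_density (y - X \<omega>) * exp (t * X \<omega>))"
      by (rule W_eq(1)[OF P S(1)])
    show "integrable M (\<lambda>\<omega>. exp (t * x) * (indicator S (X \<omega>) * std_normal_density (y - X \<omega>)))"
      by (intro integrable_mult_right J_int P S)
    fix \<omega>
    show "indicator S (X \<omega>) * std_normal_density (y - X \<omega>) * exp (t * X \<omega>) \<le> exp (t * x) * (indicator S (X \<omega>) * std_normal_density (y - X \<omega>))"
    proof (cases "X \<omega> \<in> S")
      case True
      then have "X \<omega> \<le> x" using S by auto
      then have "exp (t * X \<omega>) \<le> exp (t * x)" using t by (simp add: mult_left_mono)
      then show ?thesis using True phi_pos[of "y - X \<omega>"] by (simp add: mult.commute)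
    qed simp
  qed
  also have "\<dots> = exp (t * x) * JJ M X S y" unfolding JJ_def by simp
  finally show ?thesis .
qed

lemma W_ge:
  assumes P: "prob_space M" "X \<in> borel_measurable M" and S: "S \<in> sets borel" "S \<subseteq> {x..}" and t: "t \<ge> 0"
  shows "(\<integral>\<omega>. indicator S (X \<omega>) * std_normal_density (y - X \<omega>) * exp (t * X \<omega>) \<partial>M) \<ge> exp (t * x) * JJ M X S y"
proof -
  have "(\<integral>\<omega>. indicator S (X \<omega>) * std_normal_density (y - X \<omega>) * exp (t * X \<omega>) \<partial>M) \<ge> (\<integral>\<omega>. exp (t * x) * (indicator S (X \<omega>) * std_normal_density (y - X \<omega>)) \<partial>M)"
  proof (rule integral_mono)
    show "integrable M (\<lambda>\<omega>. indicator S (X \<omega>) * std_normal_density (y - X \<omega>) * exp (t * X \<omega>))"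
      by (rule W_eq(1)[OF P S(1)])
    show "integrable M (\<lambda>\<omega>. exp (t * x) * (indicator S (X \<omega>) * std_normal_density (y - X \<omega>)))"
      by (intro integrable_mult_right J_int P S)
    fix \<omega>
    show "indicator S (X \<omega>) * std_normal_density (y - X \<omega>) * exp (t * X \<omega>) \<ge> exp (t * x) * (indicator S (X \<omega>) * std_normal_density (y - X \<omega>))"
    proof (cases "X \<omega> \<in> S")
      case True
      then have "X \<omega> \<ge> x" using S by auto
      then have "exp (t * X \<omega>) \<ge> exp (t * x)" using t by (simp add: mult_left_mono)
      then show ?thesis using True phi_pos[of "y - X \<omega>"] by (simp add: mult.commute)
    qed simp
  qed
  also have "(\<integral>\<omega>. exp (t * x) * (indicator S (X \<omega>) * std_normal_density (y - X \<omega>)) \<partial>M) = exp (t * x) * JJ M X S y" unfolding JJ_def by simp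
  finally show ?thesis .
qed

lemma J_neg:
  "JJ M (\<lambda>\<omega>. - X \<omega>) S y = JJ M X (uminus ` S) (- y)"
proof -
  have "indicator S (- x) = (indicator (uminus ` S) x :: real)" for x
    by (auto simp: indicator_def image_iff)
  moreover have "std_normal_density (y - - x) = std_normal_density (- y - x)" for x
    using phi_even[of "y + x"] by simp
  ultimately show ?thesis unfolding JJ_def by simp
qed

lemma unbounded:
  assumes P: "prob_space M" "X \<in> borel_measurable M"
    and H: "\<And>y. JJ M X {0<..} y \<le> JJ M X {..0} y"
  shows "JJ M X {0<..} y0 = 0"
proof (rule ccontr)
  assume "JJ M X {0<..} y0 \<noteq> 0"
  then have "\<not> (AE \<omega> in M. X \<omega> \<notin> {0<..})" using J_zero_iff[OF P, of "{0<..}" y0] by simp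
  then have "JJ M X {0<..} 0 \<noteq> 0" using J_zero_iff[OF P, of "{0<..}" 0] by simp
  then have pos: "JJ M X {0<..} 0 > 0" using J_nonneg[of M X "{0<..}" 0] by linarith
  let ?en = "\<lambda>n. 0 + inverse (real (Suc n))"
  have "(\<lambda>n. JJ M X {?en n<..} 0) \<longlonglongrightarrow> JJ M X {0<..} 0"
    by (rule J_lim[OF P _ _ ev_above(2)[OF seq_above]]) auto
  then have "eventually (\<lambda>n. JJ M X {?en n<..} 0 > 0) sequentially"
    using pos by (rule order_tendstoD(1))
  then obtain n where "JJ M X {?en n<..} 0 > 0" by (meson eventually_sequentially order_refl)
  then obtain e where e: "e > 0" "JJ M X {e<..} 0 > 0" by (metis add_0 inverse_positive_iff_positive of_nat_0_less_iff zero_less_Suc)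
  define d where "d = JJ M X {e<..} 0"
  define G where "G = JJ M X UNIV 0"
  have d: "d > 0" using e d_def by simp
  have G: "G \<ge> 0" using G_def J_nonneg by simp
  have sub: "{e<..} \<subseteq> {e..}" by auto
  define t where "t = G / (e * d) + 1"
  have "G / (e * d) \<ge> 0" using G e d by simp
  then have t: "t > 0" by (simp add: t_def)
  have "exp (t * e) * d \<le> exp (t * 0 + t\<^sup>2/2) * JJ M X {e<..} (0 + t)"
    using W_ge[OF P _ sub less_imp_le[OF t], of 0] W_eq(2)[OF P, of "{e<..}" 0 t] d_def by auto
  also have "\<dots> \<le> exp (t * 0 + t\<^sup>2/2) * JJ M X {0<..} (0 + t)"
    using e by (intro mult_left_mono J_mono[OF P]) auto
  also have "\<dots> \<le> exp (t * 0 + t\<^sup>2/2) * JJ M X {..0} (0 + t)"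
    using H by (intro mult_left_mono) auto
  also have "\<dots> \<le> exp (t * 0) * JJ M X {..0} 0"
    using W_le[OF P _ _ less_imp_le[OF t], of "{..0}" 0 0] W_eq(2)[OF P, of "{..0}" 0 t] by auto
  also have "\<dots> \<le> G" unfolding G_def using J_mono[OF P, of "{..0}" UNIV 0] by simp
  finally have A: "exp (t * e) * d \<le> G" .
  have "1 + t * e \<le> exp (t * e)" by (rule exp_ge_add_one_self)
  then have "(1 + t * e) * d \<le> exp (t * e) * d" using d by (simp add: mult_right_mono)
  moreover have "(1 + t * e) * d > G"
  proof -
    have "t * e * d = G + e * d" using e d by (simp add: t_def field_simps)
    moreover have "(1 + t * e) * d = d + t * e * d" by (simp add: algebra_simps)
    moreover have "e * d > 0" using d e by simp
    ultimately show ?thesis using d by linarith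
  qed
  ultimately show False using A by simp
qed

lemma forward:
  assumes P: "prob_space M" "X \<in> borel_measurable M"
    and H: "\<forall>y. gauss_cond_median M X y = a * y"
  shows "AE y in lborel. (\<integral>\<omega>. sgn (X \<omega> - a * y) * std_normal_density (y - X \<omega>) \<partial>M) = 0"
proof -
  have nec1: "JJ M X {..<a*y} y \<le> JJ M X {a*y..} y" and nec2: "JJ M X {a*y<..} y \<le> JJ M X {..a*y} y" for y
    using median_nec[OF P] H by auto
  have key: "JJ M X {a*y<..} y - JJ M X {..<a*y} y = 0" if "JJ M X {a*y} y = 0" for y
    using nec1[of y] nec2[of y] J_split(2,3)[OF P, of "a*y" y] that by linarith
  show ?thesis
    unfolding sign_eq[OF P]
  proof (cases "a = 0")
    case True
    have z1: "JJ M X {0<..} y = 0" for y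
      using unbounded[OF P, of y] nec2 True by simp
    have PX': "(\<lambda>\<omega>. - X \<omega>) \<in> borel_measurable M" using P by measurable
    have "JJ M (\<lambda>\<omega>. - X \<omega>) {0<..} y \<le> JJ M (\<lambda>\<omega>. - X \<omega>) {..0} y" for y
      unfolding J_neg using nec1[of "-y"] True by simp
    then have "JJ M (\<lambda>\<omega>. - X \<omega>) {0<..} (- y) = 0" for y
      using unbounded[OF P(1) PX'] by blast
    then have z2: "JJ M X {..<0} y = 0" for y unfolding J_neg by simp
    show "AE y in lborel. JJ M X {a * y<..} y - JJ M X {..<a * y} y = 0"
      using True z1 z2 by simp
  next
    case False
    interpret prob_space M by fact
    let ?D = "distr M borel X"
    interpret D: prob_space ?D by (rule prob_space_distr[OF P(2)])
    let ?C = "{c. measure ?D {c} \<noteq> 0}"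
    have cC: "countable ?C" by (rule D.countable_support)
    have "countable ((\<lambda>c. c / a) ` ?C)" using cC by simp
    then have null: "(\<lambda>c. c / a) ` ?C \<in> null_sets lborel" by (rule countable_imp_null_set_lborel)
    show "AE y in lborel. JJ M X {a * y<..} y - JJ M X {..<a * y} y = 0"
    proof (rule AE_I'[OF null], safe)
      fix y assume ne: "JJ M X {a * y<..} y - JJ M X {..<a * y} y \<noteq> 0"
      have "measure ?D {a*y} \<noteq> 0"
      proof
        assume m0: "measure ?D {a*y} = 0"
        have "measure M (X -` {a*y} \<inter> space M) = 0" using m0 P(2) by (simp add: measure_distr)
        then have "X -` {a*y} \<inter> space M \<in> null_sets M"
          using P(2) by (intro null_setsI) (auto simp: emeasure_eq_measure)
        then have "AE \<omega> in M. X \<omega> \<notin> {a*y}" by (rule AE_I') auto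
        then have "JJ M X {a*y} y = 0" using J_zero_iff[OF P, of "{a*y}" y] by simp
        then show False using key ne by simp
      qed
      then show "y \<in> (\<lambda>c. c / a) ` ?C" using False by (intro image_eqI[of _ _ "a*y"]) auto
    qed
  qed
qed

lemma good_dense:
  assumes "AE y in lborel. Q y" "u < (v::real)"
  shows "\<exists>y. u < y \<and> y < v \<and> Q y"
proof (rule ccontr)
  assume nex: "\<not> (\<exists>y. u < y \<and> y < v \<and> Q y)"
  from assms(1) obtain N where N: "{x \<in> space lborel. \<not> Q x} \<subseteq> N" "emeasure lborel N = 0" "N \<in> sets lborel"
    by (rule AE_E)
  have "{u<..<v} \<subseteq> N" using N(1) nex by auto
  then have "emeasure lborel {u<..<v} \<le> emeasure lborel N" by (rule emeasure_mono) fact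
  then show False using N(2) assms(2) by simp
qed

lemma good_seq:
  assumes "AE y in lborel. Q y"
  shows "\<exists>yn. yn \<longlonglongrightarrow> (y0::real) \<and> (\<forall>n. Q (yn n))"
proof -
  have "\<forall>n. \<exists>y. y0 < y \<and> y < y0 + inverse (real (Suc n)) \<and> Q y"
    using good_dense[OF assms] by simp
  then obtain yn where yn: "\<And>n. y0 < yn n \<and> yn n < y0 + inverse (real (Suc n)) \<and> Q (yn n)"
    by metis
  have "yn \<longlonglongrightarrow> y0"
    by (rule tendsto_sandwich[OF _ _ tendsto_const seq_above]) (use yn in \<open>auto intro!: always_eventually less_imp_le\<close>)
  then show ?thesis using yn by blast
qed

lemma backward:
  assumes P: "prob_space M" "X \<in> borel_measurable M"
    and H: "AE y in lborel. (\<integral>\<omega>. sgn (X \<omega> - a * y) * std_normal_density (y - X \<omega>) \<partial>M) = 0"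
  shows "gauss_cond_median M X y0 = a * y0"
proof -
  define Q where "Q y \<longleftrightarrow> JJ M X {a*y<..} y = JJ M X {..<a*y} y" for y
  have AQ: "AE y in lborel. Q y" using H unfolding sign_eq[OF P] Q_def by simp
  obtain yn where yn: "yn \<longlonglongrightarrow> y0" "\<And>n. Q (yn n)" using good_seq[OF AQ, of y0] by blast
  have ayn: "(\<lambda>n. a * yn n) \<longlonglongrightarrow> a * y0" by (intro tendsto_intros yn)
  have limc: "(\<lambda>n. JJ M X S (yn n)) \<longlonglongrightarrow> JJ M X S y0" if "S \<in> sets borel" for S
    using that by (intro J_lim[OF P _ that _ yn(1)]) auto
  have NS1: "JJ M X {..x} y0 \<le> JJ M X {x<..} y0" if "x < a * y0" for x
  proof (rule lim_le[OF limc limc])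
    show "eventually (\<lambda>n. JJ M X {..x} (yn n) \<le> JJ M X {x<..} (yn n)) sequentially"
      using order_tendstoD(1)[OF ayn that]
    proof (rule eventually_mono)
      fix n assume "x < a * yn n"
      then have "JJ M X {..x} (yn n) \<le> JJ M X {..<a * yn n} (yn n)" by (intro J_mono[OF P]) auto
      also have "\<dots> = JJ M X {a * yn n<..} (yn n)" using yn(2)[of n] unfolding Q_def by simp
      also have "\<dots> \<le> JJ M X {x<..} (yn n)" using \<open>x < a * yn n\<close> by (intro J_mono[OF P]) auto
      finally show "JJ M X {..x} (yn n) \<le> JJ M X {x<..} (yn n)" .
    qed
  qed auto
  have NS2: "JJ M X {x<..} y0 \<le> JJ M X {..x} y0" if "x > a * y0" for x
  proof (rule lim_le[OF limc limc])
    show "eventually (\<lambda>n. JJ M X {x<..} (yn n) \<le> JJ M X {..x} (yn n)) sequentially"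
      using order_tendstoD(2)[OF ayn that]
    proof (rule eventually_mono)
      fix n assume "a * yn n < x"
      then have "JJ M X {x<..} (yn n) \<le> JJ M X {a * yn n<..} (yn n)" by (intro J_mono[OF P]) auto
      also have "\<dots> = JJ M X {..<a * yn n} (yn n)" using yn(2)[of n] unfolding Q_def by simp
      also have "\<dots> \<le> JJ M X {..x} (yn n)" using \<open>a * yn n < x\<close> by (intro J_mono[OF P]) auto
      finally show "JJ M X {x<..} (yn n) \<le> JJ M X {..x} (yn n)" .
    qed
  qed auto
  define c0 where "c0 = a * y0"
  let ?dn = "\<lambda>n. c0 + inverse (real (Suc n))"
  have I: "JJ M X {c0<..} y0 \<le> JJ M X {..c0} y0"
  proof (rule lim_le)
    show "(\<lambda>n. JJ M X {?dn n<..} y0) \<longlonglongrightarrow> JJ M X {c0<..} y0"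
      by (rule J_lim[OF P _ _ ev_above(2)[OF seq_above]]) auto
    show "(\<lambda>n. JJ M X {..?dn n} y0) \<longlonglongrightarrow> JJ M X {..c0} y0"
      by (rule J_lim[OF P _ _ ev_above(1)[OF seq_above]]) auto
    show "eventually (\<lambda>n. JJ M X {?dn n<..} y0 \<le> JJ M X {..?dn n} y0) sequentially"
      using NS2 unfolding c0_def by (intro always_eventually allI) simp
  qed
  have II: "JJ M X {..x} y0 < JJ M X {x<..} y0" if xc: "x < c0" for x
  proof (rule ccontr)
    assume "\<not> JJ M X {..x} y0 < JJ M X {x<..} y0"
    then have E0: "JJ M X {..x} y0 = JJ M X {x<..} y0" using NS1[of x] xc c0_def by linarith
    have pos0: "JJ M X {x<..} y0 > 0"
      using J_UNIV_pos[OF P, of y0] J_split(1)[OF P, of y0 x] E0 by linarith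
    show False
    proof (cases "a = 0")
      case True
      obtain y1 where y1: "0 < y1" "y1 < 1" "Q y1" using good_dense[OF AQ, of 0 1] by auto
      obtain y2 where y2: "1 < y2" "y2 < 2" "Q y2" using good_dense[OF AQ, of 1 2] by auto
      have q1: "JJ M X {..<0} y1 = JJ M X {0<..} y1" using y1(3) True unfolding Q_def by simp
      have q2: "JJ M X {..<0} y2 = JJ M X {0<..} y2" using y2(3) True unfolding Q_def by simp
      have "\<not> JJ M X {0<..} y1 > 0"
      proof
        assume "JJ M X {0<..} y1 > 0"
        then show False
          using J_pair[OF P, of "{..<0}" "{0<..}" y1 y2 0] q1 q2 y1 y2 by (auto simp: subset_eq)
      qed
      then have "JJ M X {..<0} y1 = 0" using q1 J_nonneg[of M X "{0<..}" y1] by linarith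
      then have "AE \<omega> in M. X \<omega> \<notin> {..<0}" using J_zero_iff[OF P, of "{..<0}" y1] by simp
      then have "JJ M X {..<0} y0 = 0" using J_zero_iff[OF P, of "{..<0}" y0] by simp
      moreover have "JJ M X {..x} y0 \<le> JJ M X {..<0} y0"
        using xc True c0_def by (intro J_mono[OF P]) auto
      ultimately show False using E0 pos0 J_nonneg[of M X "{..x}" y0] by linarith
    next
      case False
      define x' where "x' = (x + c0) / 2"
      have x': "x < x'" "x' < c0" using xc by (auto simp: x'_def)
      have "JJ M X {..x'} y0 \<le> JJ M X {x'<..} y0" using NS1[of x'] x' c0_def by simp
      moreover have "JJ M X {..x} y0 \<le> JJ M X {..x'} y0" using x' by (intro J_mono[OF P]) auto
      moreover have "JJ M X {x'<..} y0 \<le> JJ M X {x<..} y0" using x' by (intro J_mono[OF P]) auto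
      ultimately have "JJ M X {..x'} y0 = JJ M X {..x} y0" using E0 by linarith
      moreover have "{..x'} = {..x} \<union> {x<..x'}" using x' by auto
      ultimately have "JJ M X {x<..x'} y0 = 0"
        using J_add[OF P, of "{..x}" "{x<..x'}" y0] by (auto simp: disjoint_iff)
      then have "AE \<omega> in M. X \<omega> \<notin> {x<..x'}" using J_zero_iff[OF P, of "{x<..x'}" y0] by simp
      then have Z: "JJ M X {x<..x'} y = 0" for y using J_zero_iff[OF P, of "{x<..x'}" y] by simp
      obtain y1 where y1: "x < a * y1" "a * y1 < x'" "Q y1"
      proof (cases "a > 0")
        case True
        obtain y1 where "x / a < y1" "y1 < x' / a" "Q y1" using good_dense[OF AQ, of "x/a" "x'/a"] x' True
          by (auto simp: divide_strict_right_mono)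
        then show ?thesis using True that[of y1] by (auto simp: pos_divide_less_eq pos_less_divide_eq mult.commute)
      next
        case neg: False
        then have "a < 0" using \<open>a \<noteq> 0\<close> by simp
        obtain y1 where "x' / a < y1" "y1 < x / a" "Q y1" using good_dense[OF AQ, of "x'/a" "x/a"] x' \<open>a < 0\<close>
          by (auto simp: divide_strict_right_mono_neg)
        then show ?thesis using \<open>a < 0\<close> that[of y1] by (auto simp: neg_divide_less_eq neg_less_divide_eq mult.commute)
      qed
      define c1 where "c1 = a * y1"
      have s1: "JJ M X {..<c1} y1 = JJ M X {..x} y1 + JJ M X {x<..<c1} y1"
      proof -
        have "{..<c1} = {..x} \<union> {x<..<c1}" using y1 c1_def by auto
        then show ?thesis using J_add[OF P, of "{..x}" "{x<..<c1}" y1] by (auto simp: disjoint_iff)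
      qed
      have s2: "JJ M X {c1<..} y1 = JJ M X {c1<..x'} y1 + JJ M X {x'<..} y1"
      proof -
        have "{c1<..} = {c1<..x'} \<union> {x'<..}" using y1 c1_def by auto
        then show ?thesis using J_add[OF P, of "{c1<..x'}" "{x'<..}" y1] by (auto simp: disjoint_iff)
      qed
      have s3: "JJ M X {x<..} y1 = JJ M X {x<..x'} y1 + JJ M X {x'<..} y1"
      proof -
        have "{x<..} = {x<..x'} \<union> {x'<..}" using x' by auto
        then show ?thesis using J_add[OF P, of "{x<..x'}" "{x'<..}" y1] by (auto simp: disjoint_iff)
      qed
      have sub1: "{x<..<c1} \<subseteq> {x<..x'}" and sub2: "{c1<..x'} \<subseteq> {x<..x'}" using y1 c1_def by auto
      have z1: "JJ M X {x<..<c1} y1 = 0"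
        using J_mono[OF P _ _ sub1, of y1] Z[of y1] J_nonneg[of M X "{x<..<c1}" y1] y1 c1_def by auto
      have z2: "JJ M X {c1<..x'} y1 = 0"
        using J_mono[OF P _ _ sub2, of y1] Z[of y1] J_nonneg[of M X "{c1<..x'}" y1] y1 c1_def by auto
      have E1: "JJ M X {..x} y1 = JJ M X {x<..} y1"
        using y1(3) s1 s2 s3 z1 z2 Z[of y1] unfolding Q_def c1_def by simp
      have pos1: "JJ M X {x<..} y1 > 0"
        using J_UNIV_pos[OF P, of y1] J_split(1)[OF P, of y1 x] E1 by linarith
      have "y1 \<noteq> y0" using y1 x' c0_def by auto
      then consider "y0 < y1" | "y1 < y0" by linarith
      then show False
      proof cases
        case 1
        then show False using J_pair[OF P, of "{..x}" "{x<..}" y0 y1 x] E0 E1 pos0 by auto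
      next
        case 2
        then show False using J_pair[OF P, of "{..x}" "{x<..}" y1 y0 x] E0 E1 pos1 by auto
      qed
    qed
  qed
  show ?thesis unfolding c0_def[symmetric] by (rule median_suff[OF P I II])
qed


theorem proposition4:
  fixes M :: "'a measure" and X Z Y :: "'a \<Rightarrow> real" and a :: real
  assumes "prob_space M"
    and "X \<in> borel_measurable M"
    and "Z \<in> borel_measurable M"
    and "prob_space.indep_var M borel X borel Z"
    and "distributed M lborel Z std_normal_density"
    and "\<And>\<omega>. Y \<omega> = X \<omega> + Z \<omega>"
  shows "(\<forall>y. gauss_cond_median M X y = a * y) \<longleftrightarrow>
         (AE y in lborel. (\<integral>\<omega>. sgn (X \<omega> - a * y) * std_normal_density (y - X \<omega>) \<partial>M) = 0)"
  using forward[OF assms(1,2)] backward[OF assms(1,2)] by blast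

end
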